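(* Let $C$ be a 2-copula and let $(U,V)$ be a random pair with joint distribution function $C$. Then: (i) $C$ is $I(-1,-1)$ if and only if $C(u,v)\,C(u',v')\ge C(u,v')\,C(u',v)$ for all $u,v,u',v'\in[0,1]$ with $u\le u'$ and $v\le v'$; (ii) $C$ is $I(1,-1)$ if and only if $[v-C(u,v)]\,[v'-C(u',v')]\le [v-C(u',v)]\,[v'-C(u,v')]$ for all $u,v,u',v'\in[0,1]$ with $u\le u'$ and $v\le v'$; (iii) $C$ is $I(-1,1)$ if and only if $[u-C(u,v)]\,[u'-C(u',v')]\le [u'-C(u',v)]\,[u-C(u,v')]$ for all $u,v,u',v'\in[0,1]$ with $u\le u'$ and $v\le v'$; (iv) $C$ is $I(1,1)$ if and only if $\widehat{C}(u,v)\,\widehat{C}(u',v')\ge \widehat{C}(u,v')\,\widehat{C}(u',v)$ for all $u,v,u',v'\in[0,1]$ with $u\le u'$ and $v\le v'$.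
   Context: An $n$-copula is the restriction to $[0,1]^n$ of an $n$-dimensional distribution function whose univariate marginals are uniform on $[0,1]$. For $\alpha=(\alpha_1,\dots,\alpha_n)\in\{-1,1\}^n$ and a random vector $\mathbf X=(X_1,\dots,X_n)$, write $\alpha\mathbf X=(\alpha_1X_1,\dots,\alpha_nX_n)$; inequalities between vectors are componentwise. $\mathbf X$ (or its distribution) is called increasing according to the direction $\alpha$, written $I(\alpha)$, if for every $\mathbf x\in\mathbb R^n$ the map $\mathbf x'\mapsto \mathbb P[\alpha\mathbf X>\mathbf x\mid \alpha\mathbf X>\mathbf x']$ is nondecreasing in $\mathbf x'$, i.e. $\mathbb P[\alpha\mathbf X>\mathbf x\mid \alpha\mathbf X>\mathbf x']\le \mathbb P[\alpha\mathbf X>\mathbf x\mid \alpha\mathbf X>\mathbf x'']$ whenever $\mathbf x'\le\mathbf x''$ and $\mathbb P[\alpha\mathbf X>\mathbf x'']>0$. A copula $C$ is called $I(\alpha)$ if a random vector with distribution function $C$ is $I(\alpha)$. The survival copula of the 2-copula $C$ is $\widehat C(u,v)=\mathbb P[U>1-u,\,V>1-v]=u+v-1+C(1-u,1-v)$. *)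

theory Defs
  imports "HOL-Probability.Probability"
begin

definition has_copula_df :: "(real \<times> real) measure \<Rightarrow> (real \<Rightarrow> real \<Rightarrow> real) \<Rightarrow> bool" where
  "has_copula_df M C \<longleftrightarrow>
     prob_space M \<and> sets M = sets (borel :: (real \<times> real) measure) \<and>
     (\<forall>u\<in>{0..1}. measure M ({..u} \<times> UNIV) = u) \<and>
     (\<forall>v\<in>{0..1}. measure M (UNIV \<times> {..v}) = v) \<and>
     (\<forall>u\<in>{0..1}. \<forall>v\<in>{0..1}. C u v = measure M ({..u} \<times> {..v}))"

definition is_2copula :: "(real \<Rightarrow> real \<Rightarrow> real) \<Rightarrow> bool" where
  "is_2copula C \<longleftrightarrow> (\<exists>M. has_copula_df M C)"

definition upper_event :: "real \<times> real \<Rightarrow> real \<times> real \<Rightarrow> (real \<times> real) set" where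
  "upper_event a x = {z. fst a * fst z > fst x \<and> snd a * snd z > snd x}"

definition cond_prob :: "'a measure \<Rightarrow> 'a set \<Rightarrow> 'a set \<Rightarrow> real" where
  "cond_prob M A B = measure M (A \<inter> B) / measure M B"

definition increasing_dir :: "(real \<times> real) measure \<Rightarrow> real \<times> real \<Rightarrow> bool" where
  "increasing_dir M a \<longleftrightarrow>
     (\<forall>x x' x''. fst x' \<le> fst x'' \<and> snd x' \<le> snd x'' \<and> measure M (upper_event a x'') > 0 \<longrightarrow>
        cond_prob M (upper_event a x) (upper_event a x')
          \<le> cond_prob M (upper_event a x) (upper_event a x''))"

definition survival_copula :: "(real \<Rightarrow> real \<Rightarrow> real) \<Rightarrow> real \<Rightarrow> real \<Rightarrow> real" where
  "survival_copula C u v = u + v - 1 + C (1 - u) (1 - v)"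

end

theory Submission
  imports Defs
begin

definition cl :: "real \<Rightarrow> real" where "cl s = max 0 (min 1 s)"

lemma cl_range: "cl s \<in> {0..1}" by (auto simp: cl_def)
lemma cl_id: "u \<in> {0..1} \<Longrightarrow> cl u = u" by (auto simp: cl_def)
lemma cl_le_iff: "0 < a \<Longrightarrow> a \<le> 1 \<Longrightarrow> a \<le> cl t \<longleftrightarrow> a \<le> t" by (auto simp: cl_def)
lemma cl_less_iff: "0 < a \<Longrightarrow> a \<le> 1 \<Longrightarrow> cl t < a \<longleftrightarrow> t < a" by (auto simp: cl_def)
lemma cl_mono: "s \<le> t \<Longrightarrow> cl s \<le> cl t" by (auto simp: cl_def)

definition TP2 :: "(real \<times> real \<Rightarrow> real) \<Rightarrow> bool" where
  "TP2 G \<longleftrightarrow> (\<forall>p p' q q'. p \<le> p' \<longrightarrow> q \<le> q' \<longrightarrow> G (p,q') * G (p',q) \<le> G (p,q) * G (p',q'))"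

lemma step1:
  assumes T: "TP2 G" and anti: "\<And>p p' q q'. p \<le> p' \<Longrightarrow> q \<le> q' \<Longrightarrow> G (p',q') \<le> G (p,q)"
    and nn: "\<And>x. G x \<ge> 0" and pp: "p \<le> p'"
  shows "G (max a p, max b q) * G (p',q) \<le> G (max a p', max b q) * G (p,q)"
proof (cases "p' \<le> a")
  case True
  then have "max a p = a" "max a p' = a" using pp by auto
  moreover have "G (p',q) \<le> G (p,q)" using anti[of p p' q q] pp by simp
  ultimately show ?thesis using nn by (simp add: mult_left_mono)
next
  case False
  define r where "r = max a p"
  have r1: "p \<le> r" "r \<le> p'" using False pp by (auto simp: r_def)
  have "max a p' = p'" using False by auto
  have m: "q \<le> max b q" by simp
  have "G (r, max b q) * G (p',q) \<le> G (r,q) * G (p', max b q)"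
    using T r1 m unfolding TP2_def by blast
  also have "\<dots> \<le> G (p,q) * G (p', max b q)"
    using anti[of p r q q] r1(1) nn by (simp add: mult_right_mono)
  finally show ?thesis using \<open>max a p' = p'\<close> by (simp add: r_def mult.commute)
qed

lemma step2:
  assumes T: "TP2 G" and anti: "\<And>p p' q q'. p \<le> p' \<Longrightarrow> q \<le> q' \<Longrightarrow> G (p',q') \<le> G (p,q)"
    and nn: "\<And>x. G x \<ge> 0" and qq: "q \<le> q'"
  shows "G (max a p, max b q) * G (p,q') \<le> G (max a p, max b q') * G (p,q)"
proof (cases "q' \<le> b")
  case True
  then have "max b q = b" "max b q' = b" using qq by auto
  moreover have "G (p,q') \<le> G (p,q)" using anti[of p p q q'] qq by simp
  ultimately show ?thesis using nn by (simp add: mult_left_mono)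
next
  case False
  define r where "r = max b q"
  have r1: "q \<le> r" "r \<le> q'" using False qq by (auto simp: r_def)
  have "max b q' = q'" using False by auto
  have m: "p \<le> max a p" by simp
  have "G (p, q') * G (max a p, r) \<le> G (p, r) * G (max a p, q')"
    using T r1 m unfolding TP2_def by blast
  also have "\<dots> \<le> G (p,q) * G (max a p, q')"
    using anti[of p p q r] r1(1) nn by (simp add: mult_right_mono)
  finally show ?thesis using \<open>max b q' = q'\<close> by (simp add: r_def mult.commute)
qed

lemma I_iff_TP2:
  assumes anti: "\<And>p p' q q'. p \<le> p' \<Longrightarrow> q \<le> q' \<Longrightarrow> G (p',q') \<le> G (p,q)"
    and nn: "\<And>x. G x \<ge> 0"
  shows "(\<forall>x x' x''. fst x' \<le> fst x'' \<and> snd x' \<le> snd x'' \<and> G x'' > 0 \<longrightarrow>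
           G (max (fst x) (fst x'), max (snd x) (snd x')) / G x'
             \<le> G (max (fst x) (fst x''), max (snd x) (snd x'')) / G x'') \<longleftrightarrow> TP2 G"
proof
  assume H: "\<forall>x x' x''. fst x' \<le> fst x'' \<and> snd x' \<le> snd x'' \<and> G x'' > 0 \<longrightarrow>
           G (max (fst x) (fst x'), max (snd x) (snd x')) / G x'
             \<le> G (max (fst x) (fst x''), max (snd x) (snd x'')) / G x''"
  show "TP2 G" unfolding TP2_def
  proof (intro allI impI)
    fix p p' q q' :: real assume pp: "p \<le> p'" and qq: "q \<le> q'"
    show "G (p,q') * G (p',q) \<le> G (p,q) * G (p',q')"
    proof (cases "G (p',q) = 0")
      case True then show ?thesis using nn by (simp add: mult_nonneg_nonneg)
    next
      case False
      then have g2: "G (p',q) > 0" using nn[of "(p',q)"] by linarith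
      have g1: "G (p,q) > 0" using g2 anti[of p p' q q] pp by linarith
      have "G (max p p, max q' q) / G (p,q) \<le> G (max p p', max q' q) / G (p',q)"
        using H[rule_format, of "(p,q)" "(p',q)" "(p,q')"] pp g2 by simp
      then have "G (p,q') / G (p,q) \<le> G (p',q') / G (p',q)"
        using pp qq by (simp add: max_def)
      then show ?thesis using g1 g2 by (simp add: divide_le_eq le_divide_eq field_simps)
    qed
  qed
next
  assume T: "TP2 G"
  show "\<forall>x x' x''. fst x' \<le> fst x'' \<and> snd x' \<le> snd x'' \<and> G x'' > 0 \<longrightarrow>
           G (max (fst x) (fst x'), max (snd x) (snd x')) / G x'
             \<le> G (max (fst x) (fst x''), max (snd x) (snd x'')) / G x''"
  proof (intro allI impI)
    fix x x' x'' :: "real \<times> real"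
    assume A: "fst x' \<le> fst x'' \<and> snd x' \<le> snd x'' \<and> G x'' > 0"
    obtain a b where x: "x = (a,b)" by (cases x)
    obtain p q where x': "x' = (p,q)" by (cases x')
    obtain p' q' where x'': "x'' = (p',q')" by (cases x'')
    have pp: "p \<le> p'" and qq: "q \<le> q'" and g3: "G (p',q') > 0" using A x' x'' by auto
    have g2: "G (p',q) > 0" using g3 anti[of p' p' q q'] qq by linarith
    have g1: "G (p,q) > 0" using g2 anti[of p p' q q] pp by linarith
    define AA where "AA = G (max a p, max b q)"
    define BB where "BB = G (max a p', max b q)"
    define DD where "DD = G (max a p', max b q')"
    have s1: "AA * G (p',q) \<le> BB * G (p,q)" unfolding AA_def BB_def by (rule step1[OF T anti nn pp])
    have s2: "BB * G (p',q') \<le> DD * G (p',q)" unfolding DD_def BB_def by (rule step2[OF T anti nn qq])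
    have "AA * G (p',q') * G (p',q) \<le> BB * G (p,q) * G (p',q')"
      using s1 g3 by (simp add: mult_right_mono)
    also have "\<dots> = (BB * G (p',q')) * G (p,q)" by (simp add: mult_ac)
    also have "\<dots> \<le> DD * G (p',q) * G (p,q)" using s2 g1 by (simp add: mult_right_mono)
    finally have "(AA * G (p',q')) * G (p',q) \<le> (DD * G (p,q)) * G (p',q)" by (simp add: mult_ac)
    then have "AA * G (p',q') \<le> DD * G (p,q)" using g2 by simp
    then have "AA / G (p,q) \<le> DD / G (p',q')" using g1 g3 by (simp add: divide_le_eq le_divide_eq field_simps)
    then show "G (max (fst x) (fst x'), max (snd x) (snd x')) / G x'
             \<le> G (max (fst x) (fst x''), max (snd x) (snd x'')) / G x''"
      using x x' x'' by (simp add: AA_def DD_def)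
  qed
qed


lemma T1:
  "TP2 (\<lambda>x. K (cl (- fst x)) (cl (- snd x))) \<longleftrightarrow>
   (\<forall>u\<in>{0..1}. \<forall>v\<in>{0..1}. \<forall>u'\<in>{0..1}. \<forall>v'\<in>{0..1}. u \<le> u' \<and> v \<le> v' \<longrightarrow>
      K u v * K u' v' \<ge> K u v' * K u' v)"
proof
  assume T: "TP2 (\<lambda>x. K (cl (- fst x)) (cl (- snd x)))"
  show "\<forall>u\<in>{0..1}. \<forall>v\<in>{0..1}. \<forall>u'\<in>{0..1}. \<forall>v'\<in>{0..1}. u \<le> u' \<and> v \<le> v' \<longrightarrow>
      K u v * K u' v' \<ge> K u v' * K u' v"
  proof (intro ballI impI)
    fix u v u' v' :: real assume r: "u \<in> {0..1}" "v \<in> {0..1}" "u' \<in> {0..1}" "v' \<in> {0..1}"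
      and o: "u \<le> u' \<and> v \<le> v'"
    show "K u v * K u' v' \<ge> K u v' * K u' v"
      using T[unfolded TP2_def, rule_format, of "-u'" "-u" "-v'" "-v"] o r by (simp add: cl_id mult_ac)
  qed
next
  assume H: "\<forall>u\<in>{0..1}. \<forall>v\<in>{0..1}. \<forall>u'\<in>{0..1}. \<forall>v'\<in>{0..1}. u \<le> u' \<and> v \<le> v' \<longrightarrow>
      K u v * K u' v' \<ge> K u v' * K u' v"
  show "TP2 (\<lambda>x. K (cl (- fst x)) (cl (- snd x)))" unfolding TP2_def
  proof (intro allI impI)
    fix p p' q q' :: real assume "p \<le> p'" "q \<le> q'"
    then have o: "cl (-p') \<le> cl (-p)" "cl (-q') \<le> cl (-q)" by (auto intro: cl_mono)
    show "K (cl (- fst (p, q'))) (cl (- snd (p, q'))) * K (cl (- fst (p', q))) (cl (- snd (p', q)))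
       \<le> K (cl (- fst (p, q))) (cl (- snd (p, q))) * K (cl (- fst (p', q'))) (cl (- snd (p', q')))"
      using H[rule_format, of "cl (-p')" "cl (-q')" "cl (-p)" "cl (-q)"] cl_range o
      by (simp add: mult_ac)
  qed
qed

lemma T2:
  "TP2 (\<lambda>x. K (cl (fst x)) (cl (- snd x))) \<longleftrightarrow>
   (\<forall>u\<in>{0..1}. \<forall>v\<in>{0..1}. \<forall>u'\<in>{0..1}. \<forall>v'\<in>{0..1}. u \<le> u' \<and> v \<le> v' \<longrightarrow>
      K u v * K u' v' \<le> K u' v * K u v')"
proof
  assume T: "TP2 (\<lambda>x. K (cl (fst x)) (cl (- snd x)))"
  show "\<forall>u\<in>{0..1}. \<forall>v\<in>{0..1}. \<forall>u'\<in>{0..1}. \<forall>v'\<in>{0..1}. u \<le> u' \<and> v \<le> v' \<longrightarrow>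
      K u v * K u' v' \<le> K u' v * K u v'"
  proof (intro ballI impI)
    fix u v u' v' :: real assume r: "u \<in> {0..1}" "v \<in> {0..1}" "u' \<in> {0..1}" "v' \<in> {0..1}"
      and o: "u \<le> u' \<and> v \<le> v'"
    show "K u v * K u' v' \<le> K u' v * K u v'"
      using T[unfolded TP2_def, rule_format, of "u" "u'" "-v'" "-v"] o r by (simp add: cl_id mult_ac)
  qed
next
  assume H: "\<forall>u\<in>{0..1}. \<forall>v\<in>{0..1}. \<forall>u'\<in>{0..1}. \<forall>v'\<in>{0..1}. u \<le> u' \<and> v \<le> v' \<longrightarrow>
      K u v * K u' v' \<le> K u' v * K u v'"
  show "TP2 (\<lambda>x. K (cl (fst x)) (cl (- snd x)))" unfolding TP2_def
  proof (intro allI impI)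
    fix p p' q q' :: real assume "p \<le> p'" "q \<le> q'"
    then have o: "cl p \<le> cl p'" "cl (-q') \<le> cl (-q)" by (auto intro: cl_mono)
    show "K (cl (fst (p, q'))) (cl (- snd (p, q'))) * K (cl (fst (p', q))) (cl (- snd (p', q)))
       \<le> K (cl (fst (p, q))) (cl (- snd (p, q))) * K (cl (fst (p', q'))) (cl (- snd (p', q')))"
      using H[rule_format, of "cl (p)" "cl (-q')" "cl (p')" "cl (-q)"] cl_range o
      by (simp add: mult_ac)
  qed
qed

lemma T3:
  "TP2 (\<lambda>x. K (cl (- fst x)) (cl (snd x))) \<longleftrightarrow>
   (\<forall>u\<in>{0..1}. \<forall>v\<in>{0..1}. \<forall>u'\<in>{0..1}. \<forall>v'\<in>{0..1}. u \<le> u' \<and> v \<le> v' \<longrightarrow>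
      K u v * K u' v' \<le> K u' v * K u v')"
proof
  assume T: "TP2 (\<lambda>x. K (cl (- fst x)) (cl (snd x)))"
  show "\<forall>u\<in>{0..1}. \<forall>v\<in>{0..1}. \<forall>u'\<in>{0..1}. \<forall>v'\<in>{0..1}. u \<le> u' \<and> v \<le> v' \<longrightarrow>
      K u v * K u' v' \<le> K u' v * K u v'"
  proof (intro ballI impI)
    fix u v u' v' :: real assume r: "u \<in> {0..1}" "v \<in> {0..1}" "u' \<in> {0..1}" "v' \<in> {0..1}"
      and o: "u \<le> u' \<and> v \<le> v'"
    show "K u v * K u' v' \<le> K u' v * K u v'"
      using T[unfolded TP2_def, rule_format, of "-u'" "-u" "v" "v'"] o r by (simp add: cl_id mult_ac)
  qed
next
  assume H: "\<forall>u\<in>{0..1}. \<forall>v\<in>{0..1}. \<forall>u'\<in>{0..1}. \<forall>v'\<in>{0..1}. u \<le> u' \<and> v \<le> v' \<longrightarrow>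
      K u v * K u' v' \<le> K u' v * K u v'"
  show "TP2 (\<lambda>x. K (cl (- fst x)) (cl (snd x)))" unfolding TP2_def
  proof (intro allI impI)
    fix p p' q q' :: real assume "p \<le> p'" "q \<le> q'"
    then have o: "cl (-p') \<le> cl (-p)" "cl q \<le> cl q'" by (auto intro: cl_mono)
    show "K (cl (- fst (p, q'))) (cl (snd (p, q'))) * K (cl (- fst (p', q))) (cl (snd (p', q)))
       \<le> K (cl (- fst (p, q))) (cl (snd (p, q))) * K (cl (- fst (p', q'))) (cl (snd (p', q')))"
      using H[rule_format, of "cl (-p')" "cl (q)" "cl (-p)" "cl (q')"] cl_range o
      by (simp add: mult_ac)
  qed
qed

lemma T4:
  "TP2 (\<lambda>x. K (1 - cl (fst x)) (1 - cl (snd x))) \<longleftrightarrow>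
   (\<forall>u\<in>{0..1}. \<forall>v\<in>{0..1}. \<forall>u'\<in>{0..1}. \<forall>v'\<in>{0..1}. u \<le> u' \<and> v \<le> v' \<longrightarrow>
      K u v * K u' v' \<ge> K u v' * K u' v)"
proof
  assume T: "TP2 (\<lambda>x. K (1 - cl (fst x)) (1 - cl (snd x)))"
  show "\<forall>u\<in>{0..1}. \<forall>v\<in>{0..1}. \<forall>u'\<in>{0..1}. \<forall>v'\<in>{0..1}. u \<le> u' \<and> v \<le> v' \<longrightarrow>
      K u v * K u' v' \<ge> K u v' * K u' v"
  proof (intro ballI impI)
    fix u v u' v' :: real assume r: "u \<in> {0..1}" "v \<in> {0..1}" "u' \<in> {0..1}" "v' \<in> {0..1}"
      and o: "u \<le> u' \<and> v \<le> v'"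
    have r2: "1 - u \<in> {0..1}" "1 - v \<in> {0..1}" "1 - u' \<in> {0..1}" "1 - v' \<in> {0..1}" using r by auto
    show "K u v * K u' v' \<ge> K u v' * K u' v"
      using T[unfolded TP2_def, rule_format, of "1-u'" "1-u" "1-v'" "1-v"] o r2 by (simp add: cl_id mult_ac)
  qed
next
  assume H: "\<forall>u\<in>{0..1}. \<forall>v\<in>{0..1}. \<forall>u'\<in>{0..1}. \<forall>v'\<in>{0..1}. u \<le> u' \<and> v \<le> v' \<longrightarrow>
      K u v * K u' v' \<ge> K u v' * K u' v"
  show "TP2 (\<lambda>x. K (1 - cl (fst x)) (1 - cl (snd x)))" unfolding TP2_def
  proof (intro allI impI)
    fix p p' q q' :: real assume "p \<le> p'" "q \<le> q'"
    then have o: "1 - cl p' \<le> 1 - cl p" "1 - cl q' \<le> 1 - cl q" by (auto intro: cl_mono)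
    have rr: "\<And>s. 1 - cl s \<in> {0..1}" using cl_range by (auto simp: cl_def)
    show "K (1 - cl (fst (p, q'))) (1 - cl (snd (p, q'))) * K (1 - cl (fst (p', q))) (1 - cl (snd (p', q)))
       \<le> K (1 - cl (fst (p, q))) (1 - cl (snd (p, q))) * K (1 - cl (fst (p', q'))) (1 - cl (snd (p', q')))"
      using H[rule_format, of "1 - cl p'" "1 - cl q'" "1 - cl p" "1 - cl q"] rr o
      by (simp add: mult_ac)
  qed
qed


context
  fixes M :: "(real \<times> real) measure" and C :: "real \<Rightarrow> real \<Rightarrow> real"
  assumes hc: "has_copula_df M C"
begin

lemma ps: "prob_space M" using hc by (simp add: has_copula_df_def)
lemma sM: "sets M = sets borel" using hc by (simp add: has_copula_df_def)
lemma spM: "space M = UNIV" using sets_eq_imp_space_eq[OF sM] by simp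
lemma inM: "A \<in> sets borel \<Longrightarrow> A \<in> sets M" using sM by simp

lemma b_le: "{z::real\<times>real. fst z \<le> s \<and> snd z \<le> t} \<in> sets M"
  by (rule inM, intro borel_closed closed_Collect_conj closed_Collect_le continuous_intros)
lemma b_X: "{z::real\<times>real. fst z \<le> s} \<in> sets M"
  by (rule inM, intro borel_closed closed_Collect_le continuous_intros)
lemma b_Y: "{z::real\<times>real. snd z \<le> s} \<in> sets M"
  by (rule inM, intro borel_closed closed_Collect_le continuous_intros)
lemma b_X1: "{z::real\<times>real. fst z = s} \<in> sets M"
  by (rule inM, intro borel_closed closed_Collect_eq continuous_intros)
lemma b_Y1: "{z::real\<times>real. snd z = s} \<in> sets M"
  by (rule inM, intro borel_closed closed_Collect_eq continuous_intros)
lemma b_gX: "{z::real\<times>real. fst z > s} \<in> sets M"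
  by (rule inM, intro borel_open open_Collect_less continuous_intros)
lemma b_gY: "{z::real\<times>real. snd z > s} \<in> sets M"
  by (rule inM, intro borel_open open_Collect_less continuous_intros)
lemma b_ue: "upper_event a x \<in> sets M"
  unfolding upper_event_def
  by (rule inM, intro borel_open open_Collect_conj open_Collect_less continuous_intros)

lemma mX: "u \<in> {0..1} \<Longrightarrow> measure M {z. fst z \<le> u} = u"
proof -
  assume u: "u \<in> {0..1}"
  have "{z::real\<times>real. fst z \<le> u} = {..u} \<times> UNIV" by auto
  then show ?thesis using hc u by (simp add: has_copula_df_def)
qed

lemma mY: "v \<in> {0..1} \<Longrightarrow> measure M {z. snd z \<le> v} = v"
proof -
  assume v: "v \<in> {0..1}"
  have "{z::real\<times>real. snd z \<le> v} = UNIV \<times> {..v}" by auto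
  then show ?thesis using hc v by (simp add: has_copula_df_def)
qed

lemma mR: "u \<in> {0..1} \<Longrightarrow> v \<in> {0..1} \<Longrightarrow> measure M {z. fst z \<le> u \<and> snd z \<le> v} = C u v"
proof -
  assume u: "u \<in> {0..1}" and v: "v \<in> {0..1}"
  have "{z::real\<times>real. fst z \<le> u \<and> snd z \<le> v} = {..u} \<times> {..v}" by auto
  then show ?thesis using hc u v by (simp add: has_copula_df_def)
qed

lemma compl_meas: "A \<in> sets M \<Longrightarrow> measure M (UNIV - A) = 1 - measure M A"
proof -
  assume A: "A \<in> sets M"
  interpret prob_space M by (rule ps)
  have "measure M (space M - A) = measure M (space M) - measure M A"
    using A by (intro finite_measure_Diff) (auto dest: sets.sets_into_space)
  then show ?thesis using prob_space spM by simp
qed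

lemma null0: "A \<in> sets M \<Longrightarrow> measure M A = 0 \<Longrightarrow> A \<in> null_sets M"
proof -
  assume "A \<in> sets M" "measure M A = 0"
  interpret prob_space M by (rule ps)
  show ?thesis using \<open>A \<in> sets M\<close> \<open>measure M A = 0\<close> by (simp add: emeasure_eq_measure null_setsI)
qed

lemma subnull: "A \<in> sets M \<Longrightarrow> B \<in> sets M \<Longrightarrow> A \<subseteq> B \<Longrightarrow> measure M B = 0 \<Longrightarrow> A \<in> null_sets M"
proof -
  assume h: "A \<in> sets M" "B \<in> sets M" "A \<subseteq> B" "measure M B = 0"
  interpret prob_space M by (rule ps)
  have "measure M A \<le> measure M B" using h by (intro finite_measure_mono) auto
  then show ?thesis using h by (intro null0) (auto simp: measure_le_0_iff)
qed

lemma nX0: "{z. fst z \<le> 0} \<in> null_sets M" using mX[of 0] b_X by (intro null0) auto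
lemma nY0: "{z. snd z \<le> 0} \<in> null_sets M" using mY[of 0] b_Y by (intro null0) auto
lemma nX1: "{z. fst z > 1} \<in> null_sets M"
proof -
  have "{z::real\<times>real. fst z > 1} = UNIV - {z. fst z \<le> 1}" by auto
  then show ?thesis using compl_meas[OF b_X, of 1] mX[of 1] by (intro null0[OF b_gX]) simp
qed
lemma nY1: "{z. snd z > 1} \<in> null_sets M"
proof -
  have "{z::real\<times>real. snd z > 1} = UNIV - {z. snd z \<le> 1}" by auto
  then show ?thesis using compl_meas[OF b_Y, of 1] mY[of 1] by (intro null0[OF b_gY]) simp
qed

lemma nXs: "{z. fst z = s} \<in> null_sets M"
proof -
  interpret prob_space M by (rule ps)
  consider "s \<le> 0" | "s > 1" | "0 < s \<and> s \<le> 1" by linarith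
  then show ?thesis
  proof cases
    case 1 then show ?thesis using subnull[OF b_X1 b_X, of s 0] mX[of 0] by auto
  next
    case 2 then show ?thesis using subnull[OF b_X1 b_gX, of s 1] nX1
      by (auto simp: measure_eq_0_null_sets)
  next
    case 3
    have bnd: "measure M {z. fst z = s} \<le> e" if e: "0 < e" "e \<le> s" for e
    proof -
      have "{z::real\<times>real. fst z = s} \<subseteq> {z. fst z \<le> s} - {z. fst z \<le> s - e}" using e by auto
      then have "measure M {z. fst z = s} \<le> measure M ({z. fst z \<le> s} - {z. fst z \<le> s - e})"
        using b_X by (intro finite_measure_mono) auto
      also have "\<dots> = measure M {z. fst z \<le> s} - measure M {z. fst z \<le> s - e}"
        using b_X e by (intro finite_measure_Diff) auto
      also have "\<dots> = e" using mX[of s] mX[of "s - e"] 3 e by simp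
      finally show ?thesis .
    qed
    have "measure M {z. fst z = s} = 0"
    proof (rule ccontr)
      assume "measure M {z. fst z = s} \<noteq> 0"
      then have pos: "measure M {z. fst z = s} > 0" by (simp add: zero_less_measure_iff)
      have "measure M {z. fst z = s} \<le> min s (measure M {z. fst z = s} / 2)"
        using pos 3 by (intro bnd) auto
      then show False using pos by linarith
    qed
    then show ?thesis using b_X1 by (intro null0)
  qed
qed

lemma nYs: "{z. snd z = s} \<in> null_sets M"
proof -
  interpret prob_space M by (rule ps)
  consider "s \<le> 0" | "s > 1" | "0 < s \<and> s \<le> 1" by linarith
  then show ?thesis
  proof cases
    case 1 then show ?thesis using subnull[OF b_Y1 b_Y, of s 0] mY[of 0] by auto
  next
    case 2 then show ?thesis using subnull[OF b_Y1 b_gY, of s 1] nY1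
      by (auto simp: measure_eq_0_null_sets)
  next
    case 3
    have bnd: "measure M {z. snd z = s} \<le> e" if e: "0 < e" "e \<le> s" for e
    proof -
      have "{z::real\<times>real. snd z = s} \<subseteq> {z. snd z \<le> s} - {z. snd z \<le> s - e}" using e by auto
      then have "measure M {z. snd z = s} \<le> measure M ({z. snd z \<le> s} - {z. snd z \<le> s - e})"
        using b_Y by (intro finite_measure_mono) auto
      also have "\<dots> = measure M {z. snd z \<le> s} - measure M {z. snd z \<le> s - e}"
        using b_Y e by (intro finite_measure_Diff) auto
      also have "\<dots> = e" using mY[of s] mY[of "s - e"] 3 e by simp
      finally show ?thesis .
    qed
    have "measure M {z. snd z = s} = 0"
    proof (rule ccontr)
      assume "measure M {z. snd z = s} \<noteq> 0"
      then have pos: "measure M {z. snd z = s} > 0" by (simp add: zero_less_measure_iff)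
      have "measure M {z. snd z = s} \<le> min s (measure M {z. snd z = s} / 2)"
        using pos 3 by (intro bnd) auto
      then show False using pos by linarith
    qed
    then show ?thesis using b_Y1 by (intro null0)
  qed
qed

definition NN :: "real \<Rightarrow> real \<Rightarrow> (real \<times> real) set" where
  "NN s t = {z. fst z \<le> 0} \<union> {z. fst z > 1} \<union> {z. snd z \<le> 0} \<union> {z. snd z > 1}
     \<union> {z. fst z = s} \<union> {z. snd z = t}"

lemma NN_null: "NN s t \<in> null_sets M"
  unfolding NN_def by (intro null_sets.Un nX0 nX1 nY0 nY1 nXs nYs)

lemma meas_eq: "A \<in> sets M \<Longrightarrow> B \<in> sets M \<Longrightarrow> A - NN s t = B - NN s t \<Longrightarrow> measure M A = measure M B"
  using measure_Diff_null_set[OF _ NN_null] by metis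


lemma b_gl: "{z::real\<times>real. fst z > s \<and> snd z \<le> t} \<in> sets M"
proof -
  have eq: "{z::real\<times>real. fst z > s \<and> snd z \<le> t} = {z. snd z \<le> t} - {z. fst z \<le> s \<and> snd z \<le> t}" by auto
  show ?thesis unfolding eq by (intro sets.Diff b_Y b_le)
qed
lemma b_lg: "{z::real\<times>real. fst z \<le> s \<and> snd z > t} \<in> sets M"
proof -
  have eq: "{z::real\<times>real. fst z \<le> s \<and> snd z > t} = {z. fst z \<le> s} - {z. fst z \<le> s \<and> snd z \<le> t}" by auto
  show ?thesis unfolding eq by (intro sets.Diff b_X b_le)
qed
lemma b_gg: "{z::real\<times>real. fst z > s \<and> snd z > t} \<in> sets M"
proof -
  have eq: "{z::real\<times>real. fst z > s \<and> snd z > t} = {z. fst z > s} - {z. fst z > s \<and> snd z \<le> t}" by auto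
  show ?thesis unfolding eq by (intro sets.Diff b_gX b_gl)
qed

lemma mR2: "s \<in> {0..1} \<Longrightarrow> t \<in> {0..1} \<Longrightarrow> measure M {z. fst z > s \<and> snd z \<le> t} = t - C s t"
proof -
  assume st: "s \<in> {0..1}" "t \<in> {0..1}"
  interpret prob_space M by (rule ps)
  have "{z::real\<times>real. fst z > s \<and> snd z \<le> t} = {z. snd z \<le> t} - {z. fst z \<le> s \<and> snd z \<le> t}" by auto
  moreover have "measure M ({z. snd z \<le> t} - {z. fst z \<le> s \<and> snd z \<le> t}) =
     measure M {z. snd z \<le> t} - measure M {z. fst z \<le> s \<and> snd z \<le> t}"
    using b_Y b_le by (intro finite_measure_Diff) auto
  ultimately show ?thesis using mY mR st by simp
qed

lemma mR3: "s \<in> {0..1} \<Longrightarrow> t \<in> {0..1} \<Longrightarrow> measure M {z. fst z \<le> s \<and> snd z > t} = s - C s t"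
proof -
  assume st: "s \<in> {0..1}" "t \<in> {0..1}"
  interpret prob_space M by (rule ps)
  have "{z::real\<times>real. fst z \<le> s \<and> snd z > t} = {z. fst z \<le> s} - {z. fst z \<le> s \<and> snd z \<le> t}" by auto
  moreover have "measure M ({z. fst z \<le> s} - {z. fst z \<le> s \<and> snd z \<le> t}) =
     measure M {z. fst z \<le> s} - measure M {z. fst z \<le> s \<and> snd z \<le> t}"
    using b_X b_le by (intro finite_measure_Diff) auto
  ultimately show ?thesis using mX mR st by simp
qed

lemma mR4: "s \<in> {0..1} \<Longrightarrow> t \<in> {0..1} \<Longrightarrow> measure M {z. fst z > s \<and> snd z > t} = 1 - s - t + C s t"
proof -
  assume st: "s \<in> {0..1}" "t \<in> {0..1}"
  interpret prob_space M by (rule ps)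
  have "{z::real\<times>real. fst z > s \<and> snd z > t} = {z. fst z > s} - {z. fst z > s \<and> snd z \<le> t}" by auto
  moreover have "measure M ({z. fst z > s} - {z. fst z > s \<and> snd z \<le> t}) =
     measure M {z. fst z > s} - measure M {z. fst z > s \<and> snd z \<le> t}"
    using b_gX b_gl by (intro finite_measure_Diff) auto
  moreover have "{z::real\<times>real. fst z > s} = UNIV - {z. fst z \<le> s}" by auto
  ultimately show ?thesis using mX mR2 st compl_meas[OF b_X, of s] by simp
qed

lemma G1: "measure M (upper_event (-1,-1) x) = C (cl (- fst x)) (cl (- snd x))"
proof -
  have "measure M (upper_event (-1,-1) x) = measure M {z. fst z \<le> cl (- fst x) \<and> snd z \<le> cl (- snd x)}"
    by (rule meas_eq[where s="- fst x" and t="- snd x"], rule b_ue, rule b_le, auto simp: upper_event_def NN_def cl_le_iff cl_less_iff)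
  then show ?thesis using mR cl_range by simp
qed

lemma G2: "measure M (upper_event (1,-1) x) = cl (- snd x) - C (cl (fst x)) (cl (- snd x))"
proof -
  have "measure M (upper_event (1,-1) x) = measure M {z. fst z > cl (fst x) \<and> snd z \<le> cl (- snd x)}"
    by (rule meas_eq[where s="fst x" and t="- snd x"], rule b_ue, rule b_gl, auto simp: upper_event_def NN_def cl_le_iff cl_less_iff)
  then show ?thesis using mR2 cl_range by simp
qed

lemma G3: "measure M (upper_event (-1,1) x) = cl (- fst x) - C (cl (- fst x)) (cl (snd x))"
proof -
  have "measure M (upper_event (-1,1) x) = measure M {z. fst z \<le> cl (- fst x) \<and> snd z > cl (snd x)}"
    by (rule meas_eq[where s="- fst x" and t="snd x"], rule b_ue, rule b_lg, auto simp: upper_event_def NN_def cl_le_iff cl_less_iff)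
  then show ?thesis using mR3 cl_range by simp
qed

lemma G4: "measure M (upper_event (1,1) x) = survival_copula C (1 - cl (fst x)) (1 - cl (snd x))"
proof -
  have "measure M (upper_event (1,1) x) = measure M {z. fst z > cl (fst x) \<and> snd z > cl (snd x)}"
    by (rule meas_eq[where s="fst x" and t="snd x"], rule b_ue, rule b_gg, auto simp: upper_event_def NN_def cl_le_iff cl_less_iff)
  then show ?thesis using mR4 cl_range by (simp add: survival_copula_def)
qed

lemma ue_int: "upper_event a x \<inter> upper_event a x' =
   upper_event a (max (fst x) (fst x'), max (snd x) (snd x'))"
  by (auto simp: upper_event_def)

lemma ue_anti: "p \<le> p' \<Longrightarrow> q \<le> q' \<Longrightarrow> measure M (upper_event a (p',q')) \<le> measure M (upper_event a (p,q))"
proof -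
  assume "p \<le> p'" "q \<le> q'"
  interpret prob_space M by (rule ps)
  have "upper_event a (p',q') \<subseteq> upper_event a (p,q)" using \<open>p \<le> p'\<close> \<open>q \<le> q'\<close>
    by (auto simp: upper_event_def)
  then show ?thesis using b_ue by (intro finite_measure_mono) auto
qed

lemma inc_iff: "increasing_dir M a \<longleftrightarrow> TP2 (\<lambda>x. measure M (upper_event a x))"
proof -
  have "increasing_dir M a \<longleftrightarrow> (\<forall>x x' x''. fst x' \<le> fst x'' \<and> snd x' \<le> snd x'' \<and> measure M (upper_event a x'') > 0 \<longrightarrow>
           measure M (upper_event a (max (fst x) (fst x'), max (snd x) (snd x'))) / measure M (upper_event a x')
             \<le> measure M (upper_event a (max (fst x) (fst x''), max (snd x) (snd x''))) / measure M (upper_event a x''))"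
    unfolding increasing_dir_def cond_prob_def ue_int ..
  also have "\<dots> \<longleftrightarrow> TP2 (\<lambda>x. measure M (upper_event a x))"
    by (rule I_iff_TP2) (auto intro: ue_anti)
  finally show ?thesis .
qed
end


theorem theorem3p1:
  fixes C :: "real \<Rightarrow> real \<Rightarrow> real" and M :: "(real \<times> real) measure"
  assumes "is_2copula C"
    and "has_copula_df M C"
  shows "(increasing_dir M (-1, -1) \<longleftrightarrow>
           (\<forall>u\<in>{0..1}. \<forall>v\<in>{0..1}. \<forall>u'\<in>{0..1}. \<forall>v'\<in>{0..1}. u \<le> u' \<and> v \<le> v' \<longrightarrow>
              C u v * C u' v' \<ge> C u v' * C u' v))
       \<and> (increasing_dir M (1, -1) \<longleftrightarrow>
           (\<forall>u\<in>{0..1}. \<forall>v\<in>{0..1}. \<forall>u'\<in>{0..1}. \<forall>v'\<in>{0..1}. u \<le> u' \<and> v \<le> v' \<longrightarrow>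
              (v - C u v) * (v' - C u' v') \<le> (v - C u' v) * (v' - C u v')))
       \<and> (increasing_dir M (-1, 1) \<longleftrightarrow>
           (\<forall>u\<in>{0..1}. \<forall>v\<in>{0..1}. \<forall>u'\<in>{0..1}. \<forall>v'\<in>{0..1}. u \<le> u' \<and> v \<le> v' \<longrightarrow>
              (u - C u v) * (u' - C u' v') \<le> (u' - C u' v) * (u - C u v')))
       \<and> (increasing_dir M (1, 1) \<longleftrightarrow>
           (\<forall>u\<in>{0..1}. \<forall>v\<in>{0..1}. \<forall>u'\<in>{0..1}. \<forall>v'\<in>{0..1}. u \<le> u' \<and> v \<le> v' \<longrightarrow>
              survival_copula C u v * survival_copula C u' v'
                \<ge> survival_copula C u v' * survival_copula C u' v))"
proof -
  note h = assms(2)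
  have e1: "increasing_dir M (-1,-1) \<longleftrightarrow> TP2 (\<lambda>x. C (cl (- fst x)) (cl (- snd x)))"
    using inc_iff[OF h, of "(-1,-1)"] G1[OF h] by simp
  have e2: "increasing_dir M (1,-1) \<longleftrightarrow> TP2 (\<lambda>x. (\<lambda>u v. v - C u v) (cl (fst x)) (cl (- snd x)))"
    using inc_iff[OF h, of "(1,-1)"] G2[OF h] by simp
  have e3: "increasing_dir M (-1,1) \<longleftrightarrow> TP2 (\<lambda>x. (\<lambda>u v. u - C u v) (cl (- fst x)) (cl (snd x)))"
    using inc_iff[OF h, of "(-1,1)"] G3[OF h] by simp
  have e4: "increasing_dir M (1,1) \<longleftrightarrow> TP2 (\<lambda>x. survival_copula C (1 - cl (fst x)) (1 - cl (snd x)))"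
    using inc_iff[OF h, of "(1,1)"] G4[OF h] by simp
  show ?thesis
    unfolding e1 e2 e3 e4 T1 T2[of "\<lambda>u v. v - C u v"] T3[of "\<lambda>u v. u - C u v"] T4
    by (simp add: mult_ac)
qed

end
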